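(* Let $H_1$ and $H_2$ be atomic hypergraphs with $\mathcal A(H_1)$ and $\mathcal A(H_2)$ of ranks $r_1$ and $r_2$, and let $k$ be an integer with $-1\le k\le \min(r_1,r_2)-1$. If the set of faces of rank $k$ of $\mathcal A(H_1)$ equals the set of faces of rank $k$ of $\mathcal A(H_2)$, then $\mathcal A(H_1)=\mathcal A(H_2)$.
   Context: A hypergraph is a finite set $H$ of nonempty subsets of some finite set; its carrier is $\bigcup H$. For a family $F$ and set $Y$, $F_Y=\{X\in F\mid X\subseteq Y\}$. A hypergraph partition of $H$ is a partition $\{H_1,\dots,H_n\}$ ($n\ge0$) of the set $H$ with $\{\bigcup H_1,\dots,\bigcup H_n\}$ a partition of $\bigcup H$; $H$ is connected if it has exactly one hypergraph partition; the finest hypergraph partition is the unique one whose blocks are connected; the sets $\bigcup H_i$ for its blocks are the connected components of the carrier, and their number $n$ is the connectedness number. $H$ is atomic if $\{x\}\in H$ for all $x\in\bigcup H$. Constructions of an atomic $H$, by induction on $|\bigcup H|$: (0) $\emptyset$ is the only construction of $\emptyset$; (1) if $|\bigcup H|\ge1$, $H$ connected, $x\in\bigcup H$, $K$ a construction of $H_{\bigcup H\setminus\{x\}}$, then $K\cup\{\bigcup H\}$ is a construction of $H$; (2) if $H$ is not connected with finest hypergraph partition $\{H_1,\dots,H_n\}$, $n\ge2$, and $K_i$ is a construction of $H_i$, then $K_1\cup\dots\cup K_n$ is a construction of $H$. A construct of $H$ is a subset of a construction of $H$ containing every connected component of $\bigcup H$. $H$ is saturated if $X_1,X_2\in H$,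 $X_1\cap X_2\ne\emptyset$ imply $X_1\cup X_2\in H$. $Y\subseteq\bigcup H$ is dispensable in $H$ if $H_Y\setminus\{Y\}$ is a connected hypergraph with carrier $Y$; hypergraphs on the same carrier are cognate if related by the equivalence relation generated by $H\sim H\cup\{Y\}$ for $Y$ dispensable in $H$; the saturated closure $\bar H$ is the unique saturated hypergraph cognate to $H$. The poset $\mathcal A(H)$ has as elements all constructs of $H$ together with $\bar H^*=\bar H\cup\{*\}$ ($*$ a fixed new element not in any carrier), ordered by $C_1\le C_2$ iff $C_2\subseteq C_1$. Its rank is $r=|\bigcup H|-n$; for $0\le k\le r$ the faces of rank $k$ are the constructs of cardinality $|\bigcup H|-k$, and $\bar H^*$ is the unique face of rank $-1$. *)

theory Defs
  imports Main
begin

definition hypergraph :: "'a set set \<Rightarrow> bool" where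
  "hypergraph H \<longleftrightarrow> finite H \<and> finite (\<Union>H) \<and> (\<forall>X\<in>H. X \<noteq> {})"

definition restr :: "'a set set \<Rightarrow> 'a set \<Rightarrow> 'a set set" where
  "restr F Y = {X \<in> F. X \<subseteq> Y}"

definition hypergraph_partition :: "'a set set \<Rightarrow> 'a set set set \<Rightarrow> bool" where
  "hypergraph_partition H P \<longleftrightarrow>
     (\<forall>B\<in>P. B \<noteq> {}) \<and> \<Union>P = H \<and>
     (\<forall>B1\<in>P. \<forall>B2\<in>P. B1 \<noteq> B2 \<longrightarrow> B1 \<inter> B2 = {}) \<and>
     (\<forall>B1\<in>P. \<forall>B2\<in>P. B1 \<noteq> B2 \<longrightarrow> \<Union>B1 \<inter> \<Union>B2 = {})"

definition connected_hg :: "'a set set \<Rightarrow> bool" where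
  "connected_hg H \<longleftrightarrow> (\<exists>!P. hypergraph_partition H P)"

definition finest_partition :: "'a set set \<Rightarrow> 'a set set set" where
  "finest_partition H = (THE P. hypergraph_partition H P \<and> (\<forall>B\<in>P. connected_hg B))"

definition components :: "'a set set \<Rightarrow> 'a set set" where
  "components H = (\<lambda>B. \<Union>B) ` finest_partition H"

definition connectedness_number :: "'a set set \<Rightarrow> nat" where
  "connectedness_number H = card (finest_partition H)"

definition atomic :: "'a set set \<Rightarrow> bool" where
  "atomic H \<longleftrightarrow> (\<forall>x\<in>\<Union>H. {x} \<in> H)"

inductive construction :: "'a set set \<Rightarrow> 'a set set \<Rightarrow> bool" where
  empty: "construction {} {}"
| conn: "\<lbrakk> card (\<Union>H) \<ge> 1; connected_hg H; x \<in> \<Union>H;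
           construction (restr H (\<Union>H - {x})) K \<rbrakk>
         \<Longrightarrow> construction H (insert (\<Union>H) K)"
| disconn: "\<lbrakk> \<not> connected_hg H; finest_partition H = P; card P \<ge> 2;
              \<forall>B\<in>P. construction B (K B) \<rbrakk>
         \<Longrightarrow> construction H (\<Union>B\<in>P. K B)"

definition construct :: "'a set set \<Rightarrow> 'a set set \<Rightarrow> bool" where
  "construct H C \<longleftrightarrow> (\<exists>K. construction H K \<and> C \<subseteq> K) \<and> components H \<subseteq> C"

definition saturated :: "'a set set \<Rightarrow> bool" where
  "saturated H \<longleftrightarrow> (\<forall>X1\<in>H. \<forall>X2\<in>H. X1 \<inter> X2 \<noteq> {} \<longrightarrow> X1 \<union> X2 \<in> H)"

definition dispensable :: "'a set set \<Rightarrow> 'a set \<Rightarrow> bool" where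
  "dispensable H Y \<longleftrightarrow> Y \<subseteq> \<Union>H \<and>
     connected_hg (restr H Y - {Y}) \<and> \<Union>(restr H Y - {Y}) = Y"

definition add_dispensable :: "'a set set \<Rightarrow> 'a set set \<Rightarrow> bool" where
  "add_dispensable H H' \<longleftrightarrow> (\<exists>Y. Y \<noteq> {} \<and> dispensable H Y \<and> H' = H \<union> {Y})"

definition cognate :: "'a set set \<Rightarrow> 'a set set \<Rightarrow> bool" where
  "cognate = (sup add_dispensable add_dispensable\<inverse>\<inverse>)\<^sup>*\<^sup>*"

definition sat_closure :: "'a set set \<Rightarrow> 'a set set" where
  "sat_closure H = (THE S. hypergraph S \<and> saturated S \<and> cognate H S)"

text \<open>Elements of A(H) are encoded as sets of type 'a set option: a construct C is
  encoded as Some ` C, and the new element * is None, so that H-bar-star is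
  insert None (Some ` H-bar). The order is reverse inclusion, hence determined by
  the set of elements.\<close>

definition satstar :: "'a set set \<Rightarrow> 'a set option set" where
  "satstar H = insert None (Some ` sat_closure H)"

definition A_poset :: "'a set set \<Rightarrow> 'a set option set set" where
  "A_poset H = {Some ` C | C. construct H C} \<union> {satstar H}"

definition A_rank :: "'a set set \<Rightarrow> int" where
  "A_rank H = int (card (\<Union>H)) - int (connectedness_number H)"

definition faces :: "'a set set \<Rightarrow> int \<Rightarrow> 'a set option set set" where
  "faces H k =
     (if k = -1 then {satstar H}
      else if 0 \<le> k \<and> k \<le> A_rank H then
        {Some ` C | C. construct H C \<and> int (card C) = int (card (\<Union>H)) - k}
      else {})"

end

theory Submission
  imports Defs
begin


definition split_hg :: "'a set set \<Rightarrow> bool" where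
  "split_hg H \<longleftrightarrow> (\<exists>A B. A \<noteq> {} \<and> B \<noteq> {} \<and> A \<union> B = H \<and> A \<inter> B = {} \<and> \<Union>A \<inter> \<Union>B = {})"

lemma conn_iff: "connected_hg H \<longleftrightarrow> \<not> split_hg H"
proof
  assume c: "connected_hg H"
  show "\<not> split_hg H"
  proof
    assume "split_hg H"
    then obtain A B where AB: "A \<noteq> {}" "B \<noteq> {}" "A \<union> B = H" "A \<inter> B = {}" "\<Union>A \<inter> \<Union>B = {}"
      unfolding split_hg_def by blast
    have p1: "hypergraph_partition H {H}" using AB unfolding hypergraph_partition_def by auto
    have "A \<noteq> B" using AB by auto
    hence p2: "hypergraph_partition H {A,B}" using AB unfolding hypergraph_partition_def by auto
    have "{A,B} \<noteq> {H}" using AB by auto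
    thus False using c p1 p2 unfolding connected_hg_def by blast
  qed
next
  assume ns: "\<not> split_hg H"
  show "connected_hg H"
  proof (cases "H = {}")
    case True
    have "hypergraph_partition H {}" using True unfolding hypergraph_partition_def by auto
    moreover have "P = {}" if "hypergraph_partition H P" for P
      using that True unfolding hypergraph_partition_def by auto
    ultimately show ?thesis unfolding connected_hg_def by blast
  next
    case False
    have p1: "hypergraph_partition H {H}" using False unfolding hypergraph_partition_def by auto
    moreover have "P = {H}" if hp: "hypergraph_partition H P" for P
    proof -
      have all: "B = H" if "B \<in> P" for B
      proof (rule ccontr)
        assume ne: "B \<noteq> H"
        have sub: "B \<subseteq> H" using hp that unfolding hypergraph_partition_def by auto
        have "\<Union>B \<inter> \<Union>(H - B) = {}"
        proof -
          { fix X Z assume X: "X \<in> B" and Z: "Z \<in> H - B"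
            then obtain B2 where "B2 \<in> P" "Z \<in> B2" using hp unfolding hypergraph_partition_def by auto
            moreover have "B2 \<noteq> B" using Z calculation by auto
            ultimately have "\<Union>B \<inter> \<Union>B2 = {}" using hp that unfolding hypergraph_partition_def by auto
            hence "X \<inter> Z = {}" using X \<open>Z \<in> B2\<close> by auto }
          thus ?thesis by blast
        qed
        moreover have "B \<noteq> {}" using hp that unfolding hypergraph_partition_def by auto
        moreover have "H - B \<noteq> {}" using ne sub by auto
        ultimately have "split_hg H" unfolding split_hg_def
          by (rule_tac x=B in exI, rule_tac x="H - B" in exI) (use sub in auto)
        thus False using ns by simp
      qed
      have "P \<noteq> {}" using hp False unfolding hypergraph_partition_def by auto
      thus ?thesis using all by auto
    qed
    ultimately show ?thesis unfolding connected_hg_def by blast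
  qed
qed




lemma split_sub:
  assumes "connected_hg G" "A \<inter> B = {}" "\<Union>A \<inter> \<Union>B = {}" "G \<subseteq> A \<union> B"
  shows "G \<subseteq> A \<or> G \<subseteq> B"
proof (rule ccontr)
  assume "\<not> (G \<subseteq> A \<or> G \<subseteq> B)"
  hence "G \<inter> A \<noteq> {}" "G \<inter> B \<noteq> {}" using assms(4) by auto
  hence "split_hg G" unfolding split_hg_def
    by (rule_tac x="G \<inter> A" in exI, rule_tac x="G \<inter> B" in exI) (use assms in auto)
  thus False using assms(1) conn_iff by blast
qed

lemma conn_super:
  assumes "connected_hg G" "G \<subseteq> G'" "\<Union>G' = \<Union>G" "\<forall>X\<in>G'. X \<noteq> {}"
  shows "connected_hg G'"
  unfolding conn_iff
proof
  assume "split_hg G'"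
  then obtain A B where AB: "A \<noteq> {}" "B \<noteq> {}" "A \<union> B = G'" "A \<inter> B = {}" "\<Union>A \<inter> \<Union>B = {}"
    unfolding split_hg_def by blast
  have "G \<subseteq> A \<union> B" using AB(3) assms(2) by simp
  hence "G \<subseteq> A \<or> G \<subseteq> B" using split_sub[OF assms(1) AB(4,5)] by blast
  thus False
  proof
    assume "G \<subseteq> A"
    hence "\<Union>G \<subseteq> \<Union>A" by (rule Union_mono)
    moreover have "\<Union>B \<subseteq> \<Union>G'" using AB(3) by auto
    ultimately have "\<Union>B \<subseteq> \<Union>A" using assms(3) by simp
    hence "\<Union>B = {}" using AB(5) by blast
    moreover obtain X where "X \<in> B" using AB(2) by blast
    moreover have "X \<noteq> {}" using assms(4) AB(3) calculation(2) by blast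
    ultimately show False by blast
  next
    assume "G \<subseteq> B"
    hence "\<Union>G \<subseteq> \<Union>B" by (rule Union_mono)
    moreover have "\<Union>A \<subseteq> \<Union>G'" using AB(3) by auto
    ultimately have "\<Union>A \<subseteq> \<Union>B" using assms(3) by simp
    hence "\<Union>A = {}" using AB(5) by blast
    moreover obtain X where "X \<in> A" using AB(1) by blast
    moreover have "X \<noteq> {}" using assms(4) AB(3) calculation(2) by blast
    ultimately show False by blast
  qed
qed

lemma conn_Un:
  assumes "connected_hg G1" "connected_hg G2" "\<Union>G1 \<inter> \<Union>G2 \<noteq> {}"
  shows "connected_hg (G1 \<union> G2)"
  unfolding conn_iff
proof
  assume "split_hg (G1 \<union> G2)"
  then obtain A B where AB: "A \<noteq> {}" "B \<noteq> {}" "A \<union> B = G1 \<union> G2" "A \<inter> B = {}" "\<Union>A \<inter> \<Union>B = {}"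
    unfolding split_hg_def by blast
  have s1: "G1 \<subseteq> A \<union> B" "G2 \<subseteq> A \<union> B" using AB(3) by simp_all
  have 1: "G1 \<subseteq> A \<or> G1 \<subseteq> B" using split_sub[OF assms(1) AB(4,5) s1(1)] .
  have 2: "G2 \<subseteq> A \<or> G2 \<subseteq> B" using split_sub[OF assms(2) AB(4,5) s1(2)] .
  show False
  proof (cases "G1 \<subseteq> A")
    case True
    show False
    proof (cases "G2 \<subseteq> A")
      case True
      hence "A \<union> B \<subseteq> A" using \<open>G1 \<subseteq> A\<close> AB(3) by simp
      thus False using AB(2,4) by blast
    next
      case False
      hence "G2 \<subseteq> B" using 2 by simp
      hence "\<Union>G1 \<inter> \<Union>G2 \<subseteq> \<Union>A \<inter> \<Union>B" using \<open>G1 \<subseteq> A\<close> by (meson Int_mono Union_mono)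
      thus False using AB(5) assms(3) by simp
    qed
  next
    case False
    hence "G1 \<subseteq> B" using 1 by simp
    show False
    proof (cases "G2 \<subseteq> B")
      case True
      hence "A \<union> B \<subseteq> B" using \<open>G1 \<subseteq> B\<close> AB(3) by simp
      thus False using AB(1,4) by blast
    next
      case False
      hence "G2 \<subseteq> A" using 2 by simp
      hence "\<Union>G1 \<inter> \<Union>G2 \<subseteq> \<Union>B \<inter> \<Union>A" using \<open>G1 \<subseteq> B\<close> by (meson Int_mono Union_mono)
      thus False using AB(5) assms(3) by blast
    qed
  qed
qed

lemma conn_single: "connected_hg {X}"
  unfolding conn_iff split_hg_def
proof (intro notI, elim exE conjE)
  fix A B assume "A \<noteq> {}" "B \<noteq> {}" "A \<union> B = {X}" "A \<inter> B = {}"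
  hence "A \<subseteq> {X}" "B \<subseteq> {X}" by blast+
  hence "A = {X}" "B = {X}" using \<open>A \<noteq> {}\<close> \<open>B \<noteq> {}\<close> by (simp_all add: subset_singleton_iff)
  thus False using \<open>A \<inter> B = {}\<close> by simp
qed

definition cs :: "'a set set \<Rightarrow> 'a set \<Rightarrow> bool" where
  "cs H Y \<longleftrightarrow> Y \<noteq> {} \<and> connected_hg (restr H Y) \<and> \<Union>(restr H Y) = Y"

definition Conn :: "'a set set \<Rightarrow> 'a set set" where
  "Conn H = {Y. cs H Y}"

definition comps :: "'a set set \<Rightarrow> 'a set set" where
  "comps H = {C \<in> Conn H. \<forall>Y\<in>Conn H. C \<subseteq> Y \<longrightarrow> Y = C}"

lemma restr_restr: "Y \<subseteq> W \<Longrightarrow> restr (restr H W) Y = restr H Y"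
  unfolding restr_def by auto

lemma Conn_restr: "Conn (restr H W) = {Y \<in> Conn H. Y \<subseteq> W}"
proof (rule set_eqI)
  fix Y
  have sub: "Y \<subseteq> W" if "cs (restr H W) Y" for Y
  proof -
    have "\<Union>(restr (restr H W) Y) \<subseteq> W" unfolding restr_def by auto
    thus ?thesis using that unfolding cs_def by simp
  qed
  show "Y \<in> Conn (restr H W) \<longleftrightarrow> Y \<in> {Y \<in> Conn H. Y \<subseteq> W}"
  proof
    assume "Y \<in> Conn (restr H W)"
    hence c: "cs (restr H W) Y" unfolding Conn_def by simp
    hence "Y \<subseteq> W" by (rule sub)
    hence "cs H Y" using c unfolding cs_def restr_restr[OF \<open>Y \<subseteq> W\<close>] by simp
    thus "Y \<in> {Y \<in> Conn H. Y \<subseteq> W}" using \<open>Y \<subseteq> W\<close> unfolding Conn_def by simp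
  next
    assume "Y \<in> {Y \<in> Conn H. Y \<subseteq> W}"
    hence "cs H Y" "Y \<subseteq> W" unfolding Conn_def by simp_all
    thus "Y \<in> Conn (restr H W)" unfolding Conn_def cs_def using restr_restr[OF \<open>Y \<subseteq> W\<close>] by simp
  qed
qed

lemma mem_Conn: assumes "\<forall>X\<in>H. X \<noteq> {}" "X \<in> H" shows "X \<in> Conn H"
proof -
  have u: "\<Union>(restr H X) = X" using assms unfolding restr_def by auto
  have "connected_hg (restr H X)"
  proof (rule conn_super[OF conn_single])
    show "{X} \<subseteq> restr H X" using assms(2) unfolding restr_def by simp
    show "\<Union>(restr H X) = \<Union>{X}" using u by simp
    show "\<forall>Z\<in>restr H X. Z \<noteq> {}" using assms(1) unfolding restr_def by simp
  qed
  thus ?thesis using assms u unfolding Conn_def cs_def by auto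
qed

lemma Conn_sub: "Y \<in> Conn H \<Longrightarrow> Y \<subseteq> \<Union>H"
  unfolding Conn_def cs_def restr_def by auto

lemma Conn_ne: "Y \<in> Conn H \<Longrightarrow> Y \<noteq> {}"
  unfolding Conn_def cs_def by auto

lemma finite_Conn: "finite (\<Union>H) \<Longrightarrow> finite (Conn H)"
  by (rule finite_subset[of _ "Pow (\<Union>H)"]) (auto dest: Conn_sub)

lemma Union_Conn: assumes "\<forall>X\<in>H. X \<noteq> {}" shows "\<Union>(Conn H) = \<Union>H"
proof
  show "\<Union>(Conn H) \<subseteq> \<Union>H" using Conn_sub by (meson Union_least)
  show "\<Union>H \<subseteq> \<Union>(Conn H)"
  proof (rule Union_mono, rule subsetI)
    fix X assume "X \<in> H" thus "X \<in> Conn H" using mem_Conn[OF assms] by simp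
  qed
qed

lemma restr_all: "restr H (\<Union>H) = H" unfolding restr_def by auto

lemma connected_Conn: assumes "H \<noteq> {}" "\<forall>X\<in>H. X \<noteq> {}"
  shows "connected_hg H \<longleftrightarrow> \<Union>H \<in> Conn H"
proof -
  have "\<Union>H \<noteq> {}" using assms by auto
  thus ?thesis unfolding Conn_def cs_def by (simp add: restr_all)
qed

lemma cs_Un:
  assumes "\<forall>X\<in>H. X \<noteq> {}" "Y1 \<in> Conn H" "Y2 \<in> Conn H" "Y1 \<inter> Y2 \<noteq> {}"
  shows "Y1 \<union> Y2 \<in> Conn H"
proof -
  have c1: "connected_hg (restr H Y1)" "\<Union>(restr H Y1) = Y1" and c2: "connected_hg (restr H Y2)" "\<Union>(restr H Y2) = Y2"
    using assms unfolding Conn_def cs_def by auto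
  have cu: "connected_hg (restr H Y1 \<union> restr H Y2)" using conn_Un[OF c1(1) c2(1)] c1(2) c2(2) assms(4) by simp
  have sub: "restr H Y1 \<union> restr H Y2 \<subseteq> restr H (Y1 \<union> Y2)" unfolding restr_def by auto
  have u1: "\<Union>(restr H (Y1 \<union> Y2)) \<subseteq> Y1 \<union> Y2" unfolding restr_def by auto
  have u2: "Y1 \<union> Y2 \<subseteq> \<Union>(restr H (Y1 \<union> Y2))"
  proof -
    have "Y1 \<union> Y2 = \<Union>(restr H Y1 \<union> restr H Y2)" using c1(2) c2(2) by simp
    also have "\<dots> \<subseteq> \<Union>(restr H (Y1 \<union> Y2))" using sub by (rule Union_mono)
    finally show ?thesis .
  qed
  have u: "\<Union>(restr H (Y1 \<union> Y2)) = Y1 \<union> Y2" using u1 u2 by (rule antisym)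
  have "connected_hg (restr H (Y1 \<union> Y2))"
  proof (rule conn_super[OF cu sub])
    show "\<Union>(restr H (Y1 \<union> Y2)) = \<Union>(restr H Y1 \<union> restr H Y2)" using u c1(2) c2(2) by simp
    show "\<forall>X\<in>restr H (Y1 \<union> Y2). X \<noteq> {}" using assms(1) unfolding restr_def by simp
  qed
  moreover have "Y1 \<union> Y2 \<noteq> {}" using assms(4) by blast
  ultimately show ?thesis using u unfolding Conn_def cs_def by simp
qed

lemma Conn_mono:
  assumes ne: "\<forall>X\<in>H. X \<noteq> {}" and HG: "H \<subseteq> G" and GC: "G \<subseteq> Conn H"
  shows "Conn G = Conn H"
proof
  show "Conn H \<subseteq> Conn G"
  proof
    fix Y assume Y: "Y \<in> Conn H"
    hence c: "Y \<noteq> {}" "connected_hg (restr H Y)" "\<Union>(restr H Y) = Y" unfolding Conn_def cs_def by auto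
    have u: "\<Union>(restr G Y) = Y" using c(3) HG unfolding restr_def by blast
    have "connected_hg (restr G Y)"
    proof (rule conn_super[OF c(2)])
      show "restr H Y \<subseteq> restr G Y" using HG unfolding restr_def by auto
      show "\<Union>(restr G Y) = \<Union>(restr H Y)" using u c(3) by simp
      show "\<forall>X\<in>restr G Y. X \<noteq> {}" using GC Conn_ne unfolding restr_def by blast
    qed
    thus "Y \<in> Conn G" using u c unfolding Conn_def cs_def by auto
  qed
next
  show "Conn G \<subseteq> Conn H"
  proof
    fix Y assume Y: "Y \<in> Conn G"
    hence c: "Y \<noteq> {}" "connected_hg (restr G Y)" "\<Union>(restr G Y) = Y" unfolding Conn_def cs_def by auto
    have Zc: "connected_hg (restr H Z)" "\<Union>(restr H Z) = Z" if "Z \<in> G" for Z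
      using GC that unfolding Conn_def cs_def by auto
    have u: "\<Union>(restr H Y) = Y"
    proof
      show "\<Union>(restr H Y) \<subseteq> Y" unfolding restr_def by auto
      show "Y \<subseteq> \<Union>(restr H Y)"
      proof
        fix y assume "y \<in> Y"
        then obtain Z where Z: "Z \<in> G" "Z \<subseteq> Y" "y \<in> Z" using c(3) unfolding restr_def by auto
        then obtain W where "W \<in> H" "W \<subseteq> Z" "y \<in> W" using Zc(2)[OF Z(1)] Z(3) unfolding restr_def by blast
        thus "y \<in> \<Union>(restr H Y)" using Z unfolding restr_def by auto
      qed
    qed
    have "connected_hg (restr H Y)" unfolding conn_iff
    proof
      assume "split_hg (restr H Y)"
      then obtain A B where AB: "A \<noteq> {}" "B \<noteq> {}" "A \<union> B = restr H Y" "A \<inter> B = {}" "\<Union>A \<inter> \<Union>B = {}"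
        unfolding split_hg_def by blast
      have side: "restr H Z \<subseteq> A \<or> restr H Z \<subseteq> B" if "Z \<in> restr G Y" for Z
      proof -
        have "Z \<in> G" "Z \<subseteq> Y" using that unfolding restr_def by auto
        hence "restr H Z \<subseteq> A \<union> B" using AB(3) unfolding restr_def by auto
        thus ?thesis using split_sub[OF Zc(1)[OF \<open>Z \<in> G\<close>] AB(4,5)] by blast
      qed
      define A' where "A' = {Z \<in> restr G Y. restr H Z \<subseteq> A}"
      define B' where "B' = {Z \<in> restr G Y. \<not> restr H Z \<subseteq> A}"
      have B'B: "restr H Z \<subseteq> B" if "Z \<in> B'" for Z using side that unfolding B'_def by auto
      have "\<Union>A' \<subseteq> \<Union>A"
      proof
        fix y assume "y \<in> \<Union>A'"
        then obtain Z where "Z \<in> A'" "y \<in> Z" by auto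
        moreover hence "Z \<in> G" unfolding A'_def restr_def by auto
        ultimately show "y \<in> \<Union>A" using Zc(2)[of Z] unfolding A'_def by auto
      qed
      moreover have "\<Union>B' \<subseteq> \<Union>B"
      proof
        fix y assume "y \<in> \<Union>B'"
        then obtain Z where "Z \<in> B'" "y \<in> Z" by auto
        moreover hence "Z \<in> G" unfolding B'_def restr_def by auto
        ultimately show "y \<in> \<Union>B" using Zc(2)[of Z] B'B[of Z] by auto
      qed
      ultimately have disj: "\<Union>A' \<inter> \<Union>B' = {}" using AB(5) by blast
      have "restr G Y \<subseteq> A' \<or> restr G Y \<subseteq> B'"
        using split_sub[OF c(2), of A' B'] disj unfolding A'_def B'_def by blast
      thus False
      proof
        assume "restr G Y \<subseteq> A'"
        obtain W where W: "W \<in> B" using AB(2) by auto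
        hence "W \<in> restr H Y" using AB(3) by auto
        hence "W \<in> restr G Y" "W \<in> H" using HG unfolding restr_def by auto
        hence "restr H W \<subseteq> A" using \<open>restr G Y \<subseteq> A'\<close> unfolding A'_def by auto
        moreover have "W \<in> restr H W" using \<open>W \<in> H\<close> unfolding restr_def by auto
        ultimately show False using W AB(4) by auto
      next
        assume "restr G Y \<subseteq> B'"
        obtain W where W: "W \<in> A" using AB(1) by auto
        hence "W \<in> restr H Y" using AB(3) by auto
        hence "W \<in> restr G Y" "W \<in> H" using HG unfolding restr_def by auto
        hence "restr H W \<subseteq> B" using \<open>restr G Y \<subseteq> B'\<close> B'B by auto
        moreover have "W \<in> restr H W" using \<open>W \<in> H\<close> unfolding restr_def by auto
        ultimately show False using W AB(4) by auto
      qed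
    qed
    thus "Y \<in> Conn H" using u c unfolding Conn_def cs_def by auto
  qed
qed




lemma Union_restr_Conn: "C \<in> Conn H \<Longrightarrow> \<Union>(restr H C) = C"
  unfolding Conn_def cs_def by simp

lemma comps_ex:
  assumes fin: "finite (\<Union>H)" and Y: "Y \<in> Conn H"
  shows "\<exists>C\<in>comps H. Y \<subseteq> C"
proof -
  let ?S = "{Z \<in> Conn H. Y \<subseteq> Z}"
  have "finite ?S" using finite_Conn[OF fin] by simp
  moreover have "?S \<noteq> {}" using Y by blast
  ultimately obtain m where m: "m \<in> ?S" "\<And>b. b \<in> ?S \<Longrightarrow> m \<le> b \<Longrightarrow> m = b"
    using finite_has_maximal[of ?S] by metis
  have mC: "m \<in> Conn H" "Y \<subseteq> m" using m(1) by simp_all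
  have "\<forall>Z\<in>Conn H. m \<subseteq> Z \<longrightarrow> Z = m"
  proof (intro ballI impI)
    fix Z assume "Z \<in> Conn H" "m \<subseteq> Z"
    hence "Z \<in> ?S" using mC(2) by auto
    thus "Z = m" using m(2) \<open>m \<subseteq> Z\<close> by (metis)
  qed
  hence "m \<in> comps H" unfolding comps_def using mC(1) by simp
  thus ?thesis using mC(2) by blast
qed

lemma comps_Conn: "C \<in> comps H \<Longrightarrow> C \<in> Conn H" unfolding comps_def by simp

lemma comps_unique:
  assumes ne: "\<forall>X\<in>H. X \<noteq> {}" and Y: "Y \<in> Conn H" and C: "C \<in> comps H" and i: "Y \<inter> C \<noteq> {}"
  shows "Y \<subseteq> C"
proof -
  have "Y \<union> C \<in> Conn H" using cs_Un[OF ne Y comps_Conn[OF C] i] .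
  moreover have "C \<subseteq> Y \<union> C" by blast
  ultimately have "Y \<union> C = C" using C unfolding comps_def by blast
  thus ?thesis by blast
qed

lemma comps_disj:
  assumes ne: "\<forall>X\<in>H. X \<noteq> {}" and "C1 \<in> comps H" "C2 \<in> comps H" "C1 \<noteq> C2"
  shows "C1 \<inter> C2 = {}"
proof (rule ccontr)
  assume "C1 \<inter> C2 \<noteq> {}"
  hence "C1 \<subseteq> C2" using comps_unique[OF ne comps_Conn[OF assms(2)] assms(3)] by blast
  moreover have "C2 \<subseteq> C1" using comps_unique[OF ne comps_Conn[OF assms(3)] assms(2)] \<open>C1 \<inter> C2 \<noteq> {}\<close> by blast
  ultimately show False using assms(4) by blast
qed

lemma P0_partition:
  assumes ne: "\<forall>X\<in>H. X \<noteq> {}" and fin: "finite (\<Union>H)"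
  shows "hypergraph_partition H ((\<lambda>C. restr H C) ` comps H) \<and> (\<forall>B\<in>(\<lambda>C. restr H C) ` comps H. connected_hg B)"
proof -
  have bne: "restr H C \<noteq> {}" if "C \<in> comps H" for C
  proof -
    have "\<Union>(restr H C) = C" using Union_restr_Conn[OF comps_Conn[OF that]] .
    moreover have "C \<noteq> {}" using Conn_ne[OF comps_Conn[OF that]] .
    ultimately show ?thesis by auto
  qed
  have cov: "\<Union>((\<lambda>C. restr H C) ` comps H) = H"
  proof
    show "\<Union>((\<lambda>C. restr H C) ` comps H) \<subseteq> H" unfolding restr_def by auto
    show "H \<subseteq> \<Union>((\<lambda>C. restr H C) ` comps H)"
    proof
      fix X assume X: "X \<in> H"
      obtain C where "C \<in> comps H" "X \<subseteq> C" using comps_ex[OF fin mem_Conn[OF ne X]] by blast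
      thus "X \<in> \<Union>((\<lambda>C. restr H C) ` comps H)" using X unfolding restr_def by auto
    qed
  qed
  have d1: "restr H C1 \<inter> restr H C2 = {}" if "C1 \<in> comps H" "C2 \<in> comps H" "restr H C1 \<noteq> restr H C2" for C1 C2
  proof -
    have "C1 \<noteq> C2" using that by auto
    hence "C1 \<inter> C2 = {}" using comps_disj[OF ne that(1,2)] by simp
    show ?thesis
    proof (rule ccontr)
      assume "restr H C1 \<inter> restr H C2 \<noteq> {}"
      then obtain X where "X \<in> H" "X \<subseteq> C1" "X \<subseteq> C2" unfolding restr_def by blast
      moreover hence "X \<noteq> {}" using ne by blast
      ultimately show False using \<open>C1 \<inter> C2 = {}\<close> by blast
    qed
  qed
  have d2: "\<Union>(restr H C1) \<inter> \<Union>(restr H C2) = {}" if "C1 \<in> comps H" "C2 \<in> comps H" "restr H C1 \<noteq> restr H C2" for C1 C2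
  proof -
    have "C1 \<noteq> C2" using that by auto
    hence "C1 \<inter> C2 = {}" using comps_disj[OF ne that(1,2)] by simp
    thus ?thesis using Union_restr_Conn[OF comps_Conn[OF that(1)]] Union_restr_Conn[OF comps_Conn[OF that(2)]] by simp
  qed
  have cc: "connected_hg (restr H C)" if "C \<in> comps H" for C
    using comps_Conn[OF that] unfolding Conn_def cs_def by simp
  show ?thesis unfolding hypergraph_partition_def
    using bne cov d1 d2 cc by auto
qed

lemma P0_unique:
  assumes ne: "\<forall>X\<in>H. X \<noteq> {}" and fin: "finite (\<Union>H)"
    and hp: "hypergraph_partition H P" and con: "\<forall>B\<in>P. connected_hg B"
  shows "P = (\<lambda>C. restr H C) ` comps H"
proof -
  have bne: "B \<noteq> {}" and bsub: "B \<subseteq> H" if "B \<in> P" for B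
    using hp that unfolding hypergraph_partition_def by auto
  have other: "X \<inter> \<Union>B = {}" if th: "B \<in> P" "X \<in> H - B" for B X
  proof -
    obtain B2 where "B2 \<in> P" "X \<in> B2" using hp th(2) unfolding hypergraph_partition_def by auto
    moreover have "B2 \<noteq> B" using th(2) calculation by auto
    ultimately have "\<Union>B \<inter> \<Union>B2 = {}" using hp th(1) unfolding hypergraph_partition_def by auto
    thus ?thesis using \<open>X \<in> B2\<close> by auto
  qed
  have rB: "restr H (\<Union>B) = B" if "B \<in> P" for B
  proof
    show "B \<subseteq> restr H (\<Union>B)" using bsub[OF that] unfolding restr_def by auto
    show "restr H (\<Union>B) \<subseteq> B"
    proof
      fix X assume "X \<in> restr H (\<Union>B)"
      hence X: "X \<in> H" "X \<subseteq> \<Union>B" unfolding restr_def by auto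
      show "X \<in> B"
      proof (rule ccontr)
        assume "X \<notin> B"
        hence "X \<inter> \<Union>B = {}" using other[OF that] X by auto
        moreover have "X \<noteq> {}" using X(1) ne by blast
        ultimately show False using X(2) by blast
      qed
    qed
  qed
  have inC: "\<Union>B \<in> comps H" if B: "B \<in> P" for B
  proof -
    have "\<Union>B \<noteq> {}" using bne[OF B] bsub[OF B] ne by auto
    hence cB: "\<Union>B \<in> Conn H" using con B rB[OF B] unfolding Conn_def cs_def by simp
    have "Y = \<Union>B" if Y: "Y \<in> Conn H" "\<Union>B \<subseteq> Y" for Y
    proof (rule ccontr)
      assume neq: "Y \<noteq> \<Union>B"
      have cY: "connected_hg (restr H Y)" "\<Union>(restr H Y) = Y" using Y(1) unfolding Conn_def cs_def by auto
      have BY: "B \<subseteq> restr H Y" using bsub[OF B] Y(2) unfolding restr_def by auto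
      have "restr H Y - B \<noteq> {}"
      proof
        assume "restr H Y - B = {}"
        hence "restr H Y \<subseteq> B" by blast
        hence "\<Union>(restr H Y) \<subseteq> \<Union>B" by (rule Union_mono)
        hence "Y \<subseteq> \<Union>B" using cY(2) by simp
        thus False using neq Y(2) by blast
      qed
      moreover have "\<Union>B \<inter> \<Union>(restr H Y - B) = {}"
        using other[OF B] unfolding restr_def by blast
      ultimately have "split_hg (restr H Y)" unfolding split_hg_def
        using bne[OF B] BY by (rule_tac x=B in exI, rule_tac x="restr H Y - B" in exI) auto
      thus False using cY(1) conn_iff by blast
    qed
    thus ?thesis using cB unfolding comps_def by blast
  qed
  show ?thesis
  proof
    show "P \<subseteq> (\<lambda>C. restr H C) ` comps H"
    proof
      fix B assume "B \<in> P" thus "B \<in> (\<lambda>C. restr H C) ` comps H"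
        using rB inC by (metis image_eqI)
    qed
    show "(\<lambda>C. restr H C) ` comps H \<subseteq> P"
    proof
      fix B0 assume "B0 \<in> (\<lambda>C. restr H C) ` comps H"
      then obtain C where C: "C \<in> comps H" "B0 = restr H C" by blast
      have "\<Union>(restr H C) = C" "C \<noteq> {}" using comps_Conn[OF C(1)] Union_restr_Conn Conn_ne by blast+
      then obtain X where X: "X \<in> restr H C" by auto
      hence "X \<in> H" unfolding restr_def by simp
      then obtain B where B: "B \<in> P" "X \<in> B" using hp unfolding hypergraph_partition_def by auto
      have "X \<subseteq> C" "X \<subseteq> \<Union>B" "X \<noteq> {}" using X B ne unfolding restr_def by auto
      hence "C \<inter> \<Union>B \<noteq> {}" by blast
      hence "C = \<Union>B" using comps_disj[OF ne C(1) inC[OF B(1)]] by blast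
      thus "B0 \<in> P" using C rB B by simp
    qed
  qed
qed

lemma finest_eq:
  assumes ne: "\<forall>X\<in>H. X \<noteq> {}" and fin: "finite (\<Union>H)"
  shows "finest_partition H = (\<lambda>C. restr H C) ` comps H"
  unfolding finest_partition_def
  by (rule the_equality) (use P0_partition[OF ne fin] P0_unique[OF ne fin] in auto)

lemma inj_restr: "inj_on (restr H) (comps H)"
  by (rule inj_onI) (metis Union_restr_Conn comps_Conn)

lemma components_eq:
  assumes ne: "\<forall>X\<in>H. X \<noteq> {}" and fin: "finite (\<Union>H)"
  shows "components H = comps H"
  unfolding components_def finest_eq[OF ne fin] image_image
proof -
  have "(\<lambda>x. \<Union>(restr H x)) ` comps H = id ` comps H"
    by (rule image_cong) (simp_all add: Union_restr_Conn comps_Conn)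
  thus "(\<lambda>x. \<Union>(restr H x)) ` comps H = comps H" by simp
qed

lemma cnum_eq:
  assumes ne: "\<forall>X\<in>H. X \<noteq> {}" and fin: "finite (\<Union>H)"
  shows "connectedness_number H = card (comps H)"
  unfolding connectedness_number_def finest_eq[OF ne fin] using card_image[OF inj_restr] .




definition hg :: "'a set set \<Rightarrow> bool" where
  "hg H \<longleftrightarrow> (\<forall>X\<in>H. X \<noteq> {}) \<and> finite (\<Union>H)"

lemma hg_restr: "hg H \<Longrightarrow> hg (restr H W)"
  unfolding hg_def restr_def by (auto intro: finite_subset[of _ "\<Union>H"])

lemma atomic_restr: "atomic H \<Longrightarrow> atomic (restr H W)"
  unfolding atomic_def restr_def by auto

lemma Conn_empty: "Conn {} = {}"
  using Conn_sub Conn_ne by fastforce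

lemma Conn_empty_iff: "hg H \<Longrightarrow> Conn H = {} \<longleftrightarrow> H = {}"
  using mem_Conn[of H] Conn_empty unfolding hg_def by blast

lemma empty_connected: "connected_hg {}"
  unfolding conn_iff split_hg_def by blast

lemma comps_cong: "Conn H1 = Conn H2 \<Longrightarrow> comps H1 = comps H2"
  unfolding comps_def by simp

lemma constr_transfer:
  assumes "construction H1 K" "hg H1" "hg H2" "Conn H1 = Conn H2"
  shows "construction H2 K"
  using assms
proof (induction H1 K arbitrary: H2 rule: construction.induct)
  case empty
  hence "H2 = {}" using Conn_empty_iff Conn_empty by metis
  thus ?case using construction.empty by simp
next
  case (conn H x K)
  let ?V = "\<Union>H"
  have ne1: "\<forall>X\<in>H. X \<noteq> {}" and ne2: "\<forall>X\<in>H2. X \<noteq> {}" using conn.prems unfolding hg_def by auto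
  have V: "\<Union>H2 = ?V" using Union_Conn[OF ne1] Union_Conn[OF ne2] conn.prems(3) by simp
  have Hne: "H \<noteq> {}" using conn.hyps(1) by (auto)
  have "?V \<in> Conn H" using connected_Conn[OF Hne ne1] conn.hyps(2) by simp
  hence "?V \<in> Conn H2" using conn.prems(3) by simp
  hence H2ne: "H2 \<noteq> {}" using Conn_empty by auto
  have c2: "connected_hg H2" using connected_Conn[OF H2ne ne2] V \<open>?V \<in> Conn H2\<close> by simp
  have "construction (restr H2 (\<Union>H2 - {x})) K"
  proof (rule conn.IH)
    show "hg (restr H (?V - {x}))" using hg_restr conn.prems(1) by blast
    show "hg (restr H2 (\<Union>H2 - {x}))" using hg_restr conn.prems(2) by blast
    show "Conn (restr H (?V - {x})) = Conn (restr H2 (\<Union>H2 - {x}))"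
      unfolding Conn_restr V conn.prems(3) ..
  qed
  hence "construction H2 (insert (\<Union>H2) K)"
    using construction.conn[of H2 x K] conn.hyps(1,3) c2 V by simp
  thus ?case using V by simp
next
  case (disconn H P K)
  have ne1: "\<forall>X\<in>H. X \<noteq> {}" and ne2: "\<forall>X\<in>H2. X \<noteq> {}"
    and f1: "finite (\<Union>H)" and f2: "finite (\<Union>H2)" using disconn.prems unfolding hg_def by auto
  have V: "\<Union>H2 = \<Union>H" using Union_Conn[OF ne1] Union_Conn[OF ne2] disconn.prems(3) by simp
  have Hne: "H \<noteq> {}" using disconn.hyps(1) empty_connected by auto
  have nc2: "\<not> connected_hg H2"
  proof
    assume c2: "connected_hg H2"
    have H2ne: "H2 \<noteq> {}" using Conn_empty_iff disconn.prems Hne by metis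
    have "\<Union>H2 \<in> Conn H2" using connected_Conn[OF H2ne ne2] c2 by simp
    hence "\<Union>H \<in> Conn H" using V disconn.prems(3) by simp
    thus False using connected_Conn[OF Hne ne1] disconn.hyps(1) by simp
  qed
  have cc: "comps H2 = comps H" using comps_cong disconn.prems(3) by metis
  have P: "P = restr H ` comps H" using finest_eq[OF ne1 f1] disconn.hyps(2) by simp
  define P2 where "P2 = restr H2 ` comps H"
  define K2 where "K2 = (\<lambda>B. K (restr H (\<Union>B)))"
  have fp2: "finest_partition H2 = P2" unfolding P2_def using finest_eq[OF ne2 f2] cc by simp
  have K2C: "K2 (restr H2 C) = K (restr H C)" if "C \<in> comps H" for C
  proof -
    have "C \<in> Conn H2" using that cc comps_Conn by blast
    thus ?thesis unfolding K2_def using Union_restr_Conn by metis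
  qed
  have cardeq: "card P2 = card P"
    unfolding P2_def P using card_image[OF inj_restr, of H2] card_image[OF inj_restr, of H] cc by simp
  have "\<forall>B\<in>P2. construction B (K2 B)"
  proof
    fix B assume "B \<in> P2"
    then obtain C where C: "C \<in> comps H" "B = restr H2 C" unfolding P2_def by blast
    have "restr H C \<in> P" using P C by simp
    hence IH: "\<And>H2'. hg (restr H C) \<Longrightarrow> hg H2' \<Longrightarrow> Conn (restr H C) = Conn H2' \<Longrightarrow> construction H2' (K (restr H C))"
      using disconn.IH by blast
    have "construction (restr H2 C) (K (restr H C))"
    proof (rule IH)
      show "hg (restr H C)" using hg_restr disconn.prems(1) by blast
      show "hg (restr H2 C)" using hg_restr disconn.prems(2) by blast
      show "Conn (restr H C) = Conn (restr H2 C)" unfolding Conn_restr disconn.prems(3) ..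
    qed
    thus "construction B (K2 B)" using C K2C by simp
  qed
  hence "construction H2 (\<Union>B\<in>P2. K2 B)"
    using construction.disconn[OF nc2 fp2] cardeq disconn.hyps(3) by simp
  moreover have "(\<Union>B\<in>P2. K2 B) = (\<Union>B\<in>P. K B)"
    unfolding P2_def P using K2C by simp
  ultimately show ?case by simp
qed




lemma comps_connected:
  assumes "H \<noteq> {}" "hg H" "connected_hg H"
  shows "comps H = {\<Union>H}"
proof -
  have ne: "\<forall>X\<in>H. X \<noteq> {}" using assms(2) unfolding hg_def by simp
  have V: "\<Union>H \<in> Conn H" using connected_Conn[OF assms(1) ne] assms(3) by simp
  have "\<Union>H \<in> comps H" unfolding comps_def using V Conn_sub by blast
  moreover have "C = \<Union>H" if "C \<in> comps H" for C
    using that V Conn_sub[of C H] unfolding comps_def by blast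
  ultimately show ?thesis by blast
qed

lemma comps_restr_self:
  assumes "C \<in> comps H" shows "C \<in> comps (restr H C)"
  using assms unfolding comps_def Conn_restr by auto

lemma atomic_Union_restr:
  assumes "atomic H" "x \<in> \<Union>H" shows "\<Union>(restr H (\<Union>H - {x})) = \<Union>H - {x}"
proof
  show "\<Union>(restr H (\<Union>H - {x})) \<subseteq> \<Union>H - {x}" unfolding restr_def by auto
  show "\<Union>H - {x} \<subseteq> \<Union>(restr H (\<Union>H - {x}))"
  proof
    fix y assume y: "y \<in> \<Union>H - {x}"
    hence "{y} \<in> H" using assms(1) unfolding atomic_def by blast
    thus "y \<in> \<Union>(restr H (\<Union>H - {x}))" using y unfolding restr_def by blast
  qed
qed

lemma constr_props:
  assumes "construction H K" "hg H" "atomic H"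
  shows "K \<subseteq> Conn H \<and> comps H \<subseteq> K \<and> finite K \<and> card K = card (\<Union>H)"
  using assms
proof (induction H K rule: construction.induct)
  case empty
  thus ?case unfolding comps_def by (simp add: Conn_empty)
next
  case (conn H x K)
  let ?V = "\<Union>H" and ?R = "restr H (\<Union>H - {x})"
  have ne: "\<forall>X\<in>H. X \<noteq> {}" and fin: "finite ?V" using conn.prems unfolding hg_def by auto
  have Hne: "H \<noteq> {}" using conn.hyps(1) by auto
  have IH: "K \<subseteq> Conn ?R" "comps ?R \<subseteq> K" "finite K" "card K = card (\<Union>?R)"
    using conn.IH hg_restr[OF conn.prems(1)] atomic_restr[OF conn.prems(2)] by auto
  have V: "?V \<in> Conn H" using connected_Conn[OF Hne ne] conn.hyps(2) by simp
  have KC: "K \<subseteq> Conn H" using IH(1) unfolding Conn_restr by blast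
  have "?V \<notin> K"
  proof
    assume "?V \<in> K"
    hence "?V \<subseteq> ?V - {x}" using IH(1) unfolding Conn_restr by blast
    thus False using conn.hyps(3) by blast
  qed
  hence "card (insert ?V K) = Suc (card K)" using IH(3) by simp
  also have "\<dots> = Suc (card (?V - {x}))" using IH(4) atomic_Union_restr[OF conn.prems(2) conn.hyps(3)] by simp
  also have "\<dots> = card ?V" using conn.hyps(3) fin
    by (metis card_Suc_Diff1)
  finally show ?case using comps_connected[OF Hne conn.prems(1) conn.hyps(2)] KC V IH(3) by simp
next
  case (disconn H P K)
  have ne: "\<forall>X\<in>H. X \<noteq> {}" and fin: "finite (\<Union>H)" using disconn.prems unfolding hg_def by auto
  have P: "P = restr H ` comps H" using finest_eq[OF ne fin] disconn.hyps(2) by simp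
  have fc: "finite (comps H)" using finite_Conn[OF fin] unfolding comps_def by simp
  have IH: "K (restr H C) \<subseteq> Conn (restr H C) \<and> comps (restr H C) \<subseteq> K (restr H C) \<and> finite (K (restr H C))
      \<and> card (K (restr H C)) = card C" if C: "C \<in> comps H" for C
  proof -
    have "restr H C \<in> P" using P C by simp
    hence "K (restr H C) \<subseteq> Conn (restr H C) \<and> comps (restr H C) \<subseteq> K (restr H C) \<and> finite (K (restr H C))
      \<and> card (K (restr H C)) = card (\<Union>(restr H C))"
      using disconn.IH hg_restr[OF disconn.prems(1)] atomic_restr[OF disconn.prems(2)] by blast
    thus ?thesis using Union_restr_Conn[OF comps_Conn[OF C]] by simp
  qed
  have IH1: "K (restr H C) \<subseteq> Conn (restr H C)" and IH2: "comps (restr H C) \<subseteq> K (restr H C)"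
    and IH3: "finite (K (restr H C))" and IH4: "card (K (restr H C)) = card C" if "C \<in> comps H" for C
    using IH[OF that] by blast+
  have U: "(\<Union>B\<in>P. K B) = (\<Union>C\<in>comps H. K (restr H C))" unfolding P by simp
  have sub: "(\<Union>C\<in>comps H. K (restr H C)) \<subseteq> Conn H"
  proof (rule UN_least)
    fix C assume "C \<in> comps H"
    thus "K (restr H C) \<subseteq> Conn H" using IH1[of C] unfolding Conn_restr by blast
  qed
  have cs: "comps H \<subseteq> (\<Union>C\<in>comps H. K (restr H C))"
  proof
    fix C assume C: "C \<in> comps H"
    hence "C \<in> K (restr H C)" using IH2[OF C] comps_restr_self[OF C] by blast
    thus "C \<in> (\<Union>C\<in>comps H. K (restr H C))" using C by blast
  qed
  have finU: "finite (\<Union>C\<in>comps H. K (restr H C))" using fc IH3 by (rule finite_UN_I)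
  have disj: "\<forall>C1\<in>comps H. \<forall>C2\<in>comps H. C1 \<noteq> C2 \<longrightarrow> K (restr H C1) \<inter> K (restr H C2) = {}"
  proof (intro ballI impI)
    fix C1 C2 assume C: "C1 \<in> comps H" "C2 \<in> comps H" "C1 \<noteq> C2"
    have d: "C1 \<inter> C2 = {}" using comps_disj[OF ne C] .
    show "K (restr H C1) \<inter> K (restr H C2) = {}"
    proof (rule ccontr)
      assume "K (restr H C1) \<inter> K (restr H C2) \<noteq> {}"
      then obtain Y where "Y \<in> K (restr H C1)" "Y \<in> K (restr H C2)" by blast
      hence "Y \<in> Conn (restr H C1)" "Y \<in> Conn (restr H C2)" using IH1 C by blast+
      hence "Y \<subseteq> C1" "Y \<subseteq> C2" "Y \<noteq> {}" unfolding Conn_restr using Conn_ne by blast+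
      thus False using d by blast
    qed
  qed
  have "card (\<Union>C\<in>comps H. K (restr H C)) = (\<Sum>C\<in>comps H. card (K (restr H C)))"
    by (rule card_UN_disjoint[OF fc]) (use IH3 disj in auto)
  also have "\<dots> = (\<Sum>C\<in>comps H. card C)" using IH4 by simp
  also have "\<dots> = card (\<Union>(comps H))"
  proof (rule card_Union_disjoint[symmetric])
    show "pairwise disjnt (comps H)" using comps_disj[OF ne] unfolding pairwise_def disjnt_def by blast
    show "\<And>A. A \<in> comps H \<Longrightarrow> finite A"
    proof -
      fix A assume "A \<in> comps H"
      hence "A \<subseteq> \<Union>H" using comps_Conn Conn_sub by blast
      thus "finite A" using fin finite_subset by blast
    qed
  qed
  also have "\<Union>(comps H) = \<Union>H"
  proof
    show "\<Union>(comps H) \<subseteq> \<Union>H" using comps_Conn Conn_sub by blast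
    show "\<Union>H \<subseteq> \<Union>(comps H)"
    proof
      fix y assume "y \<in> \<Union>H"
      then obtain X where X: "X \<in> H" "y \<in> X" by blast
      obtain C where "C \<in> comps H" "X \<subseteq> C" using comps_ex[OF fin mem_Conn[OF ne X(1)]] by blast
      thus "y \<in> \<Union>(comps H)" using X by blast
    qed
  qed
  finally show ?case using U sub cs finU by simp
qed

lemma constr_exists:
  assumes "hg H" "atomic H"
  shows "(\<exists>K. construction H K) \<and> (\<forall>Y\<in>Conn H. \<exists>K. construction H K \<and> Y \<in> K)"
  using assms
proof (induction "card (\<Union>H)" arbitrary: H rule: less_induct)
  case less
  have ne: "\<forall>X\<in>H. X \<noteq> {}" and fin: "finite (\<Union>H)" using less.prems unfolding hg_def by auto
  show ?case
  proof (cases "H = {}")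
    case True
    thus ?thesis using construction.empty Conn_empty by auto
  next
    case Hne: False
    let ?V = "\<Union>H"
    have Vne: "?V \<noteq> {}" using Hne ne by auto
    show ?thesis
    proof (cases "connected_hg H")
      case True
      have cV: "card ?V \<ge> 1" using Vne fin by (simp add: Suc_le_eq card_gt_0_iff)
      have rec: "\<exists>K. construction (restr H (?V - {x})) K \<and> (\<forall>Y\<in>Conn (restr H (?V - {x})). \<exists>K. construction (restr H (?V - {x})) K \<and> Y \<in> K)"
        if x: "x \<in> ?V" for x
      proof -
        have "card (\<Union>(restr H (?V - {x}))) < card ?V"
        proof -
          have "card ?V > 0" using Vne fin by (simp add: card_gt_0_iff)
          thus ?thesis using atomic_Union_restr[OF less.prems(2) x] x fin by simp
        qed
        thus ?thesis using less.hyps hg_restr[OF less.prems(1)] atomic_restr[OF less.prems(2)] by blast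
      qed
      obtain x where x: "x \<in> ?V" using Vne by blast
      obtain K0 where K0: "construction (restr H (?V - {x})) K0" using rec[OF x] by blast
      have ex: "construction H (insert ?V K0)" using construction.conn[OF cV True x K0] .
      have "\<exists>K. construction H K \<and> Y \<in> K" if Y: "Y \<in> Conn H" for Y
      proof (cases "Y = ?V")
        case True thus ?thesis using ex by blast
      next
        case False
        have "Y \<subseteq> ?V" using Conn_sub[OF Y] .
        then obtain z where z: "z \<in> ?V" "z \<notin> Y" using False by blast
        have "Y \<in> Conn (restr H (?V - {z}))" unfolding Conn_restr using Y z \<open>Y \<subseteq> ?V\<close> by blast
        then obtain K where "construction (restr H (?V - {z})) K" "Y \<in> K" using rec[OF z(1)] by blast
        thus ?thesis using construction.conn[OF cV True z(1)] by blast
      qed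
      thus ?thesis using ex by blast
    next
      case False
      define P where "P = restr H ` comps H"
      have fp: "finest_partition H = P" unfolding P_def using finest_eq[OF ne fin] .
      have cp: "card P = card (comps H)" unfolding P_def using card_image[OF inj_restr] .
      have fc: "finite (comps H)" using finite_Conn[OF fin] unfolding comps_def by simp
      have part: "hypergraph_partition H P" "\<forall>B\<in>P. connected_hg B"
        using P0_partition[OF ne fin] unfolding P_def by auto
      have c2: "card P \<ge> 2"
      proof (rule ccontr)
        assume "\<not> card P \<ge> 2"
        hence "card P = 0 \<or> card P = 1" by linarith
        moreover have "finite P" using fc cp unfolding P_def by simp
        ultimately have "P = {} \<or> (\<exists>B. P = {B})" by (metis card_0_eq card_1_singletonE)
        moreover have "\<Union>P = H" using part(1) unfolding hypergraph_partition_def by simp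
        ultimately have "P = {} \<or> (\<exists>B. P = {B})" by blast
        thus False
        proof
          assume "P = {}" thus False using \<open>\<Union>P = H\<close> Hne by simp
        next
          assume "\<exists>B. P = {B}"
          then obtain B where "P = {B}" by blast
          hence "H = B" "connected_hg B" using \<open>\<Union>P = H\<close> part(2) by simp_all
          thus False using False by simp
        qed
      qed
      have two: "C \<subset> ?V" if C: "C \<in> comps H" for C
      proof -
        have "C \<subseteq> ?V" using Conn_sub comps_Conn C by blast
        moreover obtain C' where C': "C' \<in> comps H" "C' \<noteq> C"
        proof -
          have "card (comps H) \<ge> 2" using c2 cp by simp
          moreover have "card {C} = 1" by simp
          ultimately have "\<not> comps H \<subseteq> {C}" using card_mono[of "{C}" "comps H"] by fastforce
          thus ?thesis using that by blast
        qed
        have "C' \<noteq> {}" "C' \<subseteq> ?V" using C'(1) comps_Conn Conn_ne Conn_sub by blast+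
        moreover have "C \<inter> C' = {}" using comps_disj[OF ne C C'(1)] C'(2) by blast
        ultimately show ?thesis by blast
      qed
      have rec: "\<exists>K. construction (restr H C) K \<and> (\<forall>Y\<in>Conn (restr H C). \<exists>K. construction (restr H C) K \<and> Y \<in> K)"
        if C: "C \<in> comps H" for C
      proof -
        have "card C < card ?V" using psubset_card_mono[OF fin two[OF C]] .
        hence "card (\<Union>(restr H C)) < card ?V" using Union_restr_Conn[OF comps_Conn[OF C]] by simp
        thus ?thesis using less.hyps hg_restr[OF less.prems(1)] atomic_restr[OF less.prems(2)] by blast
      qed
      define KS where "KS = (\<lambda>B. SOME K. construction (B :: 'a set set) K)"
      have KS: "construction B (KS B)" if "B \<in> P" for B
        using rec that unfolding P_def KS_def by (metis (no_types, lifting) imageE someI_ex)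
      have ex: "construction H (\<Union>B\<in>P. KS B)"
        using construction.disconn[OF False fp c2] KS by blast
      have "\<exists>K. construction H K \<and> Y \<in> K" if Y: "Y \<in> Conn H" for Y
      proof -
        obtain C0 where C0: "C0 \<in> comps H" "Y \<subseteq> C0" using comps_ex[OF fin Y] by blast
        have "Y \<in> Conn (restr H C0)" unfolding Conn_restr using Y C0 by blast
        then obtain K0 where K0: "construction (restr H C0) K0" "Y \<in> K0" using rec[OF C0(1)] by blast
        define K' where "K' = (\<lambda>B. if B = restr H C0 then K0 else KS B)"
        have "\<forall>B\<in>P. construction B (K' B)" unfolding K'_def using KS K0 by simp
        hence "construction H (\<Union>B\<in>P. K' B)" using construction.disconn[OF False fp c2] by blast
        moreover have "Y \<in> (\<Union>B\<in>P. K' B)" using K0 C0 unfolding K'_def P_def by force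
        ultimately show ?thesis by blast
      qed
      thus ?thesis using ex by blast
    qed
  qed
qed




lemma hypergraph_hg: "hypergraph H \<Longrightarrow> hg H"
  unfolding hypergraph_def hg_def by simp

lemma Conn_saturated: "hg H \<Longrightarrow> saturated (Conn H)"
  unfolding saturated_def hg_def using cs_Un by blast

lemma Conn_hypergraph: "hg H \<Longrightarrow> hypergraph (Conn H)"
  unfolding hypergraph_def hg_def using finite_Conn Union_Conn Conn_ne by metis

lemma union_in:
  assumes sat: "saturated S" and fin: "finite G" and GS: "G \<subseteq> S" and Gne: "G \<noteq> {}"
    and con: "connected_hg G"
  shows "\<Union>G \<in> S"
proof -
  let ?T = "{F. F \<subseteq> G \<and> F \<noteq> {} \<and> \<Union>F \<in> S}"
  have "?T \<subseteq> Pow G" by blast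
  hence fT: "finite ?T" using fin by (meson finite_Pow_iff finite_subset)
  obtain X where X: "X \<in> G" using Gne by blast
  hence "{X} \<in> ?T" using GS by auto
  hence Tne: "?T \<noteq> {}" by (metis empty_iff)
  from finite_has_maximal[OF fT Tne] obtain F where F0: "F \<in> ?T" "\<forall>b\<in>?T. F \<le> b \<longrightarrow> F = b" ..
  have F: "F \<in> ?T" "\<And>b. b \<in> ?T \<Longrightarrow> F \<le> b \<Longrightarrow> F = b" using F0 by auto
  have FG: "F \<subseteq> G" "F \<noteq> {}" "\<Union>F \<in> S" using F(1) by simp_all
  have dis: "\<Union>F \<inter> \<Union>(G - F) = {}"
  proof (rule ccontr)
    assume "\<Union>F \<inter> \<Union>(G - F) \<noteq> {}"
    then obtain Z where Z: "Z \<in> G" "Z \<notin> F" "\<Union>F \<inter> Z \<noteq> {}" by blast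
    have "Z \<in> S" using Z(1) GS by blast
    hence "\<Union>F \<union> Z \<in> S" using sat FG(3) Z(3) unfolding saturated_def by blast
    moreover have "\<Union>(insert Z F) = \<Union>F \<union> Z" by blast
    ultimately have "insert Z F \<in> ?T" using Z(1) FG(1) by simp
    hence "F = insert Z F" using F(2)[of "insert Z F"] by blast
    thus False using Z(2) by blast
  qed
  have "G - F = {}"
  proof (rule ccontr)
    assume "G - F \<noteq> {}"
    hence "split_hg G" unfolding split_hg_def
      apply (rule_tac x=F in exI, rule_tac x="G - F" in exI)
      using FG(1,2) dis by blast
    thus False using con conn_iff by blast
  qed
  hence "F = G" using FG(1) by blast
  thus ?thesis using FG(3) by simp
qed

lemma sat_Conn_self:
  assumes "hypergraph S" "saturated S" shows "Conn S = S"
proof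
  have ne: "\<forall>X\<in>S. X \<noteq> {}" and fin: "finite S" using assms(1) unfolding hypergraph_def by auto
  show "S \<subseteq> Conn S" using mem_Conn[OF ne] by blast
  show "Conn S \<subseteq> S"
  proof
    fix Y assume "Y \<in> Conn S"
    hence c: "Y \<noteq> {}" "connected_hg (restr S Y)" "\<Union>(restr S Y) = Y" unfolding Conn_def cs_def by auto
    have "\<Union>(restr S Y) \<in> S"
    proof (rule union_in[OF assms(2) _ _ _ c(2)])
      show "finite (restr S Y)" using fin unfolding restr_def by simp
      show "restr S Y \<subseteq> S" unfolding restr_def by auto
      show "restr S Y \<noteq> {}" using c(1,3) by auto
    qed
    thus "Y \<in> S" using c(3) by simp
  qed
qed

lemma add_disp_Conn:
  assumes "add_dispensable G G'" "\<forall>X\<in>G. X \<noteq> {}"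
  shows "Conn G' = Conn G \<and> (\<forall>X\<in>G'. X \<noteq> {})"
proof -
  obtain Y where Y: "Y \<noteq> {}" "dispensable G Y" "G' = G \<union> {Y}"
    using assms(1) unfolding add_dispensable_def by blast
  have d: "Y \<subseteq> \<Union>G" "connected_hg (restr G Y - {Y})" "\<Union>(restr G Y - {Y}) = Y"
    using Y(2) unfolding dispensable_def by auto
  have u: "\<Union>(restr G Y) = Y"
  proof
    show "\<Union>(restr G Y) \<subseteq> Y" unfolding restr_def by blast
    show "Y \<subseteq> \<Union>(restr G Y)" using d(3) by blast
  qed
  have "connected_hg (restr G Y)"
  proof (rule conn_super[OF d(2)])
    show "restr G Y - {Y} \<subseteq> restr G Y" by blast
    show "\<Union>(restr G Y) = \<Union>(restr G Y - {Y})" using u d(3) by simp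
    show "\<forall>X\<in>restr G Y. X \<noteq> {}" using assms(2) unfolding restr_def by simp
  qed
  hence YC: "Y \<in> Conn G" using u Y(1) unfolding Conn_def cs_def by simp
  have "Conn (G \<union> {Y}) = Conn G"
  proof (rule Conn_mono[OF assms(2)])
    show "G \<subseteq> G \<union> {Y}" by blast
    show "G \<union> {Y} \<subseteq> Conn G" using YC mem_Conn[OF assms(2)] by blast
  qed
  thus ?thesis using Y assms(2) by simp
qed

lemma cognate_Conn:
  assumes "cognate H S" "\<forall>X\<in>H. X \<noteq> {}"
  shows "Conn S = Conn H \<and> (\<forall>X\<in>S. X \<noteq> {})"
  using assms(1) unfolding cognate_def
proof (induction rule: rtranclp_induct)
  case base thus ?case using assms(2) by simp
next
  case (step y z)
  from step.hyps(2) have "add_dispensable y z \<or> add_dispensable z y" by simp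
  thus ?case
  proof
    assume "add_dispensable y z"
    thus ?case using add_disp_Conn step.IH by metis
  next
    assume a: "add_dispensable z y"
    then obtain Y where "y = z \<union> {Y}" unfolding add_dispensable_def by blast
    hence nz: "\<forall>X\<in>z. X \<noteq> {}" using step.IH by blast
    thus ?case using add_disp_Conn[OF a nz] step.IH by simp
  qed
qed

lemma cognate_to_Conn:
  assumes hg: "hg H"
  shows "cognate H (Conn H)"
proof -
  have ne: "\<forall>X\<in>H. X \<noteq> {}" and fin: "finite (\<Union>H)" using hg unfolding hg_def by auto
  have fC: "finite (Conn H)" using finite_Conn[OF fin] .
  have "\<And>G. H \<subseteq> G \<Longrightarrow> G \<subseteq> Conn H \<Longrightarrow> n = card (Conn H - G) \<Longrightarrow> cognate G (Conn H)" for n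
  proof (induction n)
    case 0
    hence "Conn H - G = {}" using fC by simp
    hence "G = Conn H" using "0.prems" by blast
    thus ?case unfolding cognate_def by simp
  next
    case (Suc n)
    hence "Conn H - G \<noteq> {}" by auto
    then obtain Y where Y: "Y \<in> Conn H" "Y \<notin> G" by blast
    have CG: "Conn G = Conn H" using Conn_mono[OF ne Suc.prems(1,2)] .
    have "dispensable G Y"
      unfolding dispensable_def
    proof (intro conjI)
      show "Y \<subseteq> \<Union>G" using Conn_sub[OF Y(1)] Suc.prems(1) by blast
      have "restr G Y - {Y} = restr G Y" using Y(2) unfolding restr_def by blast
      moreover have "Y \<in> Conn G" using CG Y(1) by simp
      ultimately show "connected_hg (restr G Y - {Y})" "\<Union>(restr G Y - {Y}) = Y"
        unfolding Conn_def cs_def by simp_all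
    qed
    hence ad: "add_dispensable G (G \<union> {Y})" unfolding add_dispensable_def using Conn_ne[OF Y(1)] by blast
    have "cognate (G \<union> {Y}) (Conn H)"
    proof (rule Suc.IH)
      show "H \<subseteq> G \<union> {Y}" using Suc.prems(1) by blast
      show "G \<union> {Y} \<subseteq> Conn H" using Suc.prems(2) Y(1) by blast
      have "Conn H - (G \<union> {Y}) = (Conn H - G) - {Y}" by blast
      thus "n = card (Conn H - (G \<union> {Y}))" using Suc.prems(3) Y fC by simp
    qed
    thus ?case unfolding cognate_def using ad
      by (metis (no_types, lifting) converse_rtranclp_into_rtranclp sup2I1)
  qed
  moreover have "H \<subseteq> Conn H" using mem_Conn[OF ne] by blast
  ultimately show ?thesis by blast
qed

lemma sat_closure_eq:
  assumes "hypergraph H" shows "sat_closure H = Conn H"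
proof -
  have hg: "hg H" using hypergraph_hg[OF assms] .
  have ne: "\<forall>X\<in>H. X \<noteq> {}" using hg unfolding hg_def by simp
  show ?thesis unfolding sat_closure_def
  proof (rule the_equality)
    show "hypergraph (Conn H) \<and> saturated (Conn H) \<and> cognate H (Conn H)"
      using Conn_hypergraph[OF hg] Conn_saturated[OF hg] cognate_to_Conn[OF hg] by simp
    fix S assume S: "hypergraph S \<and> saturated S \<and> cognate H S"
    hence "Conn S = Conn H" using cognate_Conn[OF _ ne] by blast
    thus "S = Conn H" using sat_Conn_self S by metis
  qed
qed




lemma construct_eq_lemma:
  assumes "\<forall>X\<in>H. X \<noteq> {}" "finite (\<Union>H)"
  shows "construct H C \<longleftrightarrow> (\<exists>K. construction H K \<and> C \<subseteq> K) \<and> comps H \<subseteq> C"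
  unfolding construct_def components_eq[OF assms] ..

lemma face_union:
  assumes hgH: "hg H" and at: "atomic H" and k0: "0 \<le> k" and kr: "k \<le> A_rank H - 1"
  shows "\<Union>{C. Some ` C \<in> faces H k} = Conn H"
proof -
  have ne: "\<forall>X\<in>H. X \<noteq> {}" and fin: "finite (\<Union>H)" using hgH unfolding hg_def by auto
  have rk: "A_rank H = int (card (\<Union>H)) - int (card (comps H))"
    unfolding A_rank_def cnum_eq[OF ne fin] ..
  have F: "faces H k = {Some ` C | C. construct H C \<and> int (card C) = int (card (\<Union>H)) - k}"
    unfolding faces_def using k0 kr by simp
  have mem: "Some ` C \<in> faces H k \<longleftrightarrow> construct H C \<and> int (card C) = int (card (\<Union>H)) - k" for C
  proof
    assume "Some ` C \<in> faces H k"
    then obtain C' where "Some ` C = Some ` C'" "construct H C'" "int (card C') = int (card (\<Union>H)) - k"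
      unfolding F by blast
    moreover hence "C = C'" by (simp add: inj_image_eq_iff)
    ultimately show "construct H C \<and> int (card C) = int (card (\<Union>H)) - k" by simp
  next
    assume "construct H C \<and> int (card C) = int (card (\<Union>H)) - k"
    thus "Some ` C \<in> faces H k" unfolding F by blast
  qed
  show ?thesis
  proof
    show "\<Union>{C. Some ` C \<in> faces H k} \<subseteq> Conn H"
    proof
      fix Y assume "Y \<in> \<Union>{C. Some ` C \<in> faces H k}"
      then obtain C where C: "Some ` C \<in> faces H k" "Y \<in> C" by blast
      then obtain K where "construction H K" "C \<subseteq> K" using mem unfolding construct_def by blast
      thus "Y \<in> Conn H" using constr_props[OF _ hgH at] C(2) by blast
    qed
    show "Conn H \<subseteq> \<Union>{C. Some ` C \<in> faces H k}"
    proof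
      fix Y assume Y: "Y \<in> Conn H"
      obtain K where K: "construction H K" "Y \<in> K" using constr_exists[OF hgH at] Y by blast
      have KP: "K \<subseteq> Conn H" "comps H \<subseteq> K" "finite K" "card K = card (\<Union>H)"
        using constr_props[OF K(1) hgH at] by auto
      define S0 where "S0 = insert Y (comps H)"
      have S0K: "S0 \<subseteq> K" unfolding S0_def using KP K by blast
      have fS0: "finite S0" using S0K KP(3) finite_subset by blast
      have cS0: "card S0 \<le> card (comps H) + 1"
        unfolding S0_def using fS0 unfolding S0_def by (simp add: card_insert_le_m1 card_insert_if)
      define m where "m = nat (int (card (\<Union>H)) - k)"
      have m1: "card S0 \<le> m" using cS0 kr rk unfolding m_def by linarith
      have m2: "m \<le> card K" using KP(4) k0 unfolding m_def by linarith
      have "m - card S0 \<le> card (K - S0)" using m2 S0K KP(3) by (simp add: card_Diff_subset fS0)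
      then obtain T where T: "T \<subseteq> K - S0" "card T = m - card S0" "finite T"
        by (rule obtain_subset_with_card_n)
      define C where "C = S0 \<union> T"
      have "S0 \<inter> T = {}" using T(1) by blast
      hence "card C = card S0 + card T" unfolding C_def using card_Un_disjoint[OF fS0 T(3)] by simp
      hence cC: "card C = m" using T(2) m1 by simp
      have CK: "C \<subseteq> K" unfolding C_def using S0K T(1) by blast
      have "comps H \<subseteq> C" unfolding C_def S0_def by blast
      hence "construct H C"
        unfolding construct_eq_lemma[OF ne fin] using K(1) CK by blast
      moreover have "int (card (\<Union>H)) - k \<ge> 0" using kr rk by linarith
      hence "int (card C) = int (card (\<Union>H)) - k" using cC unfolding m_def by simp
      ultimately have "Some ` C \<in> faces H k" using mem by blast
      moreover have "Y \<in> C" unfolding C_def S0_def by blast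
      ultimately show "Y \<in> \<Union>{C. Some ` C \<in> faces H k}" by blast
    qed
  qed
qed

theorem proposition5p3:
  fixes H1 H2 :: "'a set set" and k :: int
  assumes "hypergraph H1" and "atomic H1"
    and "hypergraph H2" and "atomic H2"
    and "-1 \<le> k" and "k \<le> min (A_rank H1) (A_rank H2) - 1"
    and "faces H1 k = faces H2 k"
  shows "A_poset H1 = A_poset H2"
proof -
  have hg1: "hg H1" and hg2: "hg H2" using assms(1,3) hypergraph_hg by auto
  have ne1: "\<forall>X\<in>H1. X \<noteq> {}" and fin1: "finite (\<Union>H1)" using hg1 unfolding hg_def by auto
  have ne2: "\<forall>X\<in>H2. X \<noteq> {}" and fin2: "finite (\<Union>H2)" using hg2 unfolding hg_def by auto
  have CC: "Conn H1 = Conn H2"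
  proof (cases "k = -1")
    case True
    hence "satstar H1 = satstar H2" using assms(7) unfolding faces_def by simp
    hence "Some ` sat_closure H1 = Some ` sat_closure H2" unfolding satstar_def
      by (metis Diff_insert_absorb image_iff option.distinct(1))
    hence "sat_closure H1 = sat_closure H2" by (simp add: inj_image_eq_iff)
    thus ?thesis using sat_closure_eq assms(1,3) by metis
  next
    case False
    hence k0: "0 \<le> k" using assms(5) by simp
    have "Conn H1 = \<Union>{C. Some ` C \<in> faces H1 k}" using face_union[OF hg1 assms(2) k0] assms(6) by simp
    also have "\<dots> = \<Union>{C. Some ` C \<in> faces H2 k}" using assms(7) by simp
    also have "\<dots> = Conn H2" using face_union[OF hg2 assms(4) k0] assms(6) by simp
    finally show ?thesis .
  qed
  have cons: "construction H1 K \<longleftrightarrow> construction H2 K" for K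
    using constr_transfer[OF _ hg1 hg2 CC] constr_transfer[OF _ hg2 hg1 CC[symmetric]] by blast
  have "comps H1 = comps H2" using comps_cong[OF CC] .
  hence "construct H1 C \<longleftrightarrow> construct H2 C" for C
    unfolding construct_eq_lemma[OF ne1 fin1] construct_eq_lemma[OF ne2 fin2] cons by simp
  moreover have "satstar H1 = satstar H2"
    unfolding satstar_def using sat_closure_eq assms(1,3) CC by metis
  ultimately show ?thesis unfolding A_poset_def by simp
qed


end
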